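(* Fix $s,b\ge1$, let $\{a_i\}$ be the $(s,b)$-Generacci sequence, and let $p_{n,k}$ denote the number of integers in $[0,a_{nb+1})$ whose $(s,b)$-Generacci legal decomposition contains exactly $k$ summands. Then for all $k\ge1$ and $n\ge1+(k-1)(s+1)$, \[p_{n,k}=b^k\binom{n-s(k-1)}{k}.\]
   Context: Fix integers $s,b\ge1$. For an increasing sequence of positive integers $\{a_i\}_{i\ge1}$ define bins $\mathcal{B}_n=\{a_{b(n-1)+1},\dots,a_{bn}\}$ for $n\ge1$, $\mathcal{B}_j=\emptyset$ for $j\le 0$. A decomposition $m=a_{\ell_1}+\dots+a_{\ell_k}$ with $a_{\ell_1}>\dots>a_{\ell_k}$ is an $(s,b)$-Generacci legal decomposition if $\{a_{\ell_i},a_{\ell_{i+1}}\}\not\subset\mathcal{B}_{j-s}\cup\dots\cup\mathcal{B}_j$ for all $i,j$. The $(s,b)$-Generacci sequence is the increasing sequence in which each $a_i$ is the smallest positive integer with no legal decomposition using $a_1,\dots,a_{i-1}$; every nonnegative integer has a unique legal decomposition. *)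

theory Defs
  imports Main
begin

text \<open>Sequences are indexed from 1: a :: nat \<Rightarrow> nat, the value a 0 is irrelevant.\<close>

definition gbin :: "(nat \<Rightarrow> nat) \<Rightarrow> nat \<Rightarrow> int \<Rightarrow> nat set" where
  "gbin a b j = (if j \<ge> 1 then {a i | i. b * (nat j - 1) + 1 \<le> i \<and> i \<le> b * nat j} else {})"

text \<open>A decomposition of m is given by the list of indices [l_1, ..., l_k] of its summands,
  with a_{l_1} > ... > a_{l_k}.\<close>
definition legal_decomp :: "nat \<Rightarrow> nat \<Rightarrow> (nat \<Rightarrow> nat) \<Rightarrow> nat \<Rightarrow> nat list \<Rightarrow> bool" where
  "legal_decomp s b a m L \<longleftrightarrow>
     (\<forall>l\<in>set L. l \<ge> 1) \<and>
     sorted_wrt (\<lambda>x y. a x > a y) L \<and>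
     (\<Sum>l\<leftarrow>L. a l) = m \<and>
     (\<forall>i. Suc i < length L \<longrightarrow>
        (\<forall>j::int. \<not> ({a (L ! i), a (L ! Suc i)} \<subseteq> (\<Union>t\<in>{j - int s..j}. gbin a b t))))"

definition is_generacci :: "nat \<Rightarrow> nat \<Rightarrow> (nat \<Rightarrow> nat) \<Rightarrow> bool" where
  "is_generacci s b a \<longleftrightarrow>
     strict_mono_on {1..} a \<and>
     (\<forall>i\<ge>1. a i = (LEAST x. x > 0 \<and>
        \<not> (\<exists>L. set L \<subseteq> {1..<i} \<and> legal_decomp s b a x L)))"

definition p_count :: "nat \<Rightarrow> nat \<Rightarrow> (nat \<Rightarrow> nat) \<Rightarrow> nat \<Rightarrow> nat \<Rightarrow> nat" where
  "p_count s b a n k = card {m. m < a (n * b + 1) \<and>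
      (\<exists>L. legal_decomp s b a m L \<and> length L = k)}"

end

theory Submission imports Defs begin

definition binof :: "nat \<Rightarrow> nat \<Rightarrow> nat" where "binof b l = (l + b - 1) div b"

definition good :: "nat \<Rightarrow> nat \<Rightarrow> nat list \<Rightarrow> bool" where
  "good s b L \<longleftrightarrow> (\<forall>x\<in>set L. 1 \<le> x) \<and> sorted_wrt (\<lambda>x y. binof b y + s < binof b x) L"

lemma binof_le_iff: assumes "b \<ge> 1" shows "binof b v \<le> q \<longleftrightarrow> v \<le> b * q"
proof -
  have "binof b v \<le> q \<longleftrightarrow> v + b - 1 < b * (q+1)"
    unfolding binof_def using assms div_less_iff_less_mult[of b "v+b-1" "q+1"]
    by (simp add: algebra_simps less_Suc_eq_le[symmetric])
  also have "\<dots> \<longleftrightarrow> v \<le> b * q" using assms by (auto simp: algebra_simps)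
  finally show ?thesis .
qed

lemma binof_ge1: "b \<ge> 1 \<Longrightarrow> v \<ge> 1 \<Longrightarrow> binof b v \<ge> 1"
  using binof_le_iff[of b v 0] by auto

lemma binof_lower: "b \<ge> 1 \<Longrightarrow> v \<ge> 1 \<Longrightarrow> b * (binof b v - 1) < v"
  using binof_le_iff[of b v "binof b v - 1"] binof_ge1[of b v] by auto

lemma binof_upper: "b \<ge> 1 \<Longrightarrow> v \<le> b * binof b v"
  using binof_le_iff[of b v "binof b v"] by auto

lemma binof_mono: "x \<le> y \<Longrightarrow> binof b x \<le> binof b y"
  unfolding binof_def by (simp add: div_le_mono)

lemma binof_char: assumes "b \<ge> 1" "v \<ge> 1" "q \<ge> 1"
  shows "(b * (q - 1) + 1 \<le> v \<and> v \<le> b * q) \<longleftrightarrow> q = binof b v"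
proof
  assume h: "b * (q - 1) + 1 \<le> v \<and> v \<le> b * q"
  then have "binof b v \<le> q" using binof_le_iff assms by auto
  moreover have "\<not> binof b v \<le> q - 1" using binof_le_iff[of b v "q-1"] assms h by auto
  ultimately show "q = binof b v" by auto
next
  assume "q = binof b v"
  then show "b * (q - 1) + 1 \<le> v \<and> v \<le> b * q" using binof_lower binof_upper assms by fastforce
qed

lemma gbin_mem:
  assumes b: "b \<ge> 1" and inj: "inj_on a {1..}" and v: "v \<ge> 1"
  shows "a v \<in> gbin a b t \<longleftrightarrow> t = int (binof b v)"
proof
  assume "a v \<in> gbin a b t"
  then obtain i where t: "t \<ge> 1" and i: "b * (nat t - 1) + 1 \<le> i" "i \<le> b * nat t" "a i = a v"
    unfolding gbin_def by (auto split: if_splits)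
  have "i = v" using inj i(1,3) v by (auto dest: inj_onD)
  then have "nat t = binof b v" using binof_char[of b v "nat t"] b v t i by auto
  then show "t = int (binof b v)" using t by auto
next
  assume t: "t = int (binof b v)"
  have "binof b v \<ge> 1" using binof_ge1 b v by auto
  then show "a v \<in> gbin a b t" unfolding gbin_def t
    using binof_char[of b v "binof b v"] b v by auto
qed

lemma union_mem:
  assumes b: "b \<ge> 1" and inj: "inj_on a {1..}" and v: "v \<ge> 1"
  shows "a v \<in> (\<Union>t\<in>{j - int s..j}. gbin a b t) \<longleftrightarrow> j - int s \<le> int (binof b v) \<and> int (binof b v) \<le> j"
  using gbin_mem[OF b inj v] by auto

lemma transp_R: "transp (\<lambda>x y. binof b y + s < binof b x)"
  by (auto simp: transp_def)

lemma R_less: "binof b y + s < binof b x \<Longrightarrow> y < x"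
  using binof_mono[of x y b] by (metis add_lessD1 not_less)

lemma legal_iff:
  assumes b: "b \<ge> 1" and sm: "strict_mono_on {1..} a"
  shows "legal_decomp s b a m L \<longleftrightarrow> good s b L \<and> sum_list (map a L) = m"
proof -
  have inj: "inj_on a {1..}" using sm strict_mono_on_imp_inj_on by blast
  let ?R = "\<lambda>x y. binof b y + s < binof b x"
  have C: "(\<forall>j::int. \<not> ({a x, a y} \<subseteq> (\<Union>t\<in>{j - int s..j}. gbin a b t))) \<longleftrightarrow> \<not> (binof b x \<le> binof b y + s \<and> binof b y \<le> binof b x + s)"
    if "x \<ge> 1" "y \<ge> 1" for x y
  proof -
    have "(\<forall>j::int. \<not> ({a x, a y} \<subseteq> (\<Union>t\<in>{j - int s..j}. gbin a b t))) \<longleftrightarrow>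
      (\<forall>j::int. \<not> ((j - int s \<le> int (binof b x) \<and> int (binof b x) \<le> j) \<and> (j - int s \<le> int (binof b y) \<and> int (binof b y) \<le> j)))"
      using union_mem[OF b inj that(1)] union_mem[OF b inj that(2)] by simp
    also have "\<dots> \<longleftrightarrow> \<not> (binof b x \<le> binof b y + s \<and> binof b y \<le> binof b x + s)"
    proof
      assume h: "\<forall>j::int. \<not> ((j - int s \<le> int (binof b x) \<and> int (binof b x) \<le> j) \<and> (j - int s \<le> int (binof b y) \<and> int (binof b y) \<le> j))"
      show "\<not> (binof b x \<le> binof b y + s \<and> binof b y \<le> binof b x + s)"
        using h[rule_format, of "int (max (binof b x) (binof b y))"] by auto
    qed auto
    finally show ?thesis .
  qed
  show ?thesis
  proof
    assume l: "legal_decomp s b a m L"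
    then have ge: "\<forall>x\<in>set L. 1 \<le> x" and sw: "sorted_wrt (\<lambda>x y. a x > a y) L"
      and sum: "sum_list (map a L) = m"
      and cons: "\<forall>i. Suc i < length L \<longrightarrow> (\<forall>j::int. \<not> ({a (L ! i), a (L ! Suc i)} \<subseteq> (\<Union>t\<in>{j - int s..j}. gbin a b t)))"
      unfolding legal_decomp_def by auto
    have "?R (L!i) (L!Suc i)" if i: "Suc i < length L" for i
    proof -
      have x: "L!i \<ge> 1" and y: "L!Suc i \<ge> 1" using ge i by auto
      have "a (L!Suc i) < a (L!i)" using sorted_wrt_nth_less[OF sw, of i "Suc i"] i by auto
      then have "L!Suc i < L!i"
        using strict_mono_on_leD[OF sm, of "L!i" "L!Suc i"] x y by (meson atLeast_iff not_le)
      then have "binof b (L!Suc i) \<le> binof b (L!i)" by (simp add: binof_mono)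
      moreover have "\<not> (binof b (L!i) \<le> binof b (L!Suc i) + s \<and> binof b (L!Suc i) \<le> binof b (L!i) + s)"
        using C[OF x y] cons i by auto
      ultimately show ?thesis by auto
    qed
    then have "sorted_wrt ?R L" using sorted_wrt_iff_nth_Suc_transp[OF transp_R] by blast
    then show "good s b L \<and> sum_list (map a L) = m" using ge sum unfolding good_def by auto
  next
    assume g: "good s b L \<and> sum_list (map a L) = m"
    then have ge: "\<forall>x\<in>set L. 1 \<le> x" and sw: "sorted_wrt ?R L" unfolding good_def by auto
    have sw2: "sorted_wrt (\<lambda>x y. a x > a y) L"
      apply (rule sorted_wrt_mono_rel[OF _ sw])
      using R_less sm ge by (meson atLeast_iff strict_mono_onD)
    have "\<forall>i. Suc i < length L \<longrightarrow> (\<forall>j::int. \<not> ({a (L ! i), a (L ! Suc i)} \<subseteq> (\<Union>t\<in>{j - int s..j}. gbin a b t)))"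
    proof (rule allI, rule impI)
      fix i assume i: "Suc i < length L"
      have x: "L!i \<ge> 1" and y: "L!Suc i \<ge> 1" using ge i by auto
      have "?R (L!i) (L!Suc i)" using sorted_wrt_nth_less[OF sw, of i "Suc i"] i by auto
      then show "\<forall>j::int. \<not> ({a (L ! i), a (L ! Suc i)} \<subseteq> (\<Union>t\<in>{j - int s..j}. gbin a b t))"
        using C[OF x y] by auto
    qed
    then show "legal_decomp s b a m L" using ge sw2 g unfolding legal_decomp_def by auto
  qed
qed

definition G :: "nat \<Rightarrow> nat \<Rightarrow> nat \<Rightarrow> nat list set" where
  "G s b i = {L. good s b L \<and> set L \<subseteq> {1..<i}}"

definition fb :: "nat \<Rightarrow> nat \<Rightarrow> nat \<Rightarrow> nat" where
  "fb s b i = b * (binof b i - s - 1)"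

lemma good_Nil[simp]: "good s b []" by (simp add: good_def)

lemma good_Cons: "good s b (x#L) \<longleftrightarrow> 1 \<le> x \<and> (\<forall>y\<in>set L. binof b y + s < binof b x) \<and> good s b L"
  by (auto simp: good_def)

lemma cond_iff: assumes "b \<ge> 1" "y \<ge> 1"
  shows "binof b y + s < binof b i \<longleftrightarrow> y \<le> b * (binof b i - s - 1)"
proof -
  have "binof b y \<ge> 1" using binof_ge1 assms by auto
  then have "binof b y + s < binof b i \<longleftrightarrow> binof b y \<le> binof b i - s - 1" by auto
  also have "\<dots> \<longleftrightarrow> y \<le> b * (binof b i - s - 1)" using binof_le_iff assms(1) by blast
  finally show ?thesis .
qed

lemma fb_less: assumes "b \<ge> 1" "i \<ge> 1" shows "fb s b i < i"
proof -
  have "fb s b i \<le> b * (binof b i - 1)" unfolding fb_def by (intro mult_le_mono2) simp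
  also have "\<dots> < i" using binof_lower assms by auto
  finally show ?thesis .
qed

lemma good_head_max: "good s b (x#L) \<Longrightarrow> y \<in> set L \<Longrightarrow> y < x"
  using R_less by (auto simp: good_def)

lemma G_Suc: assumes b: "b \<ge> 1" and i: "i \<ge> 1"
  shows "G s b (Suc i) = G s b i \<union> (Cons i) ` G s b (fb s b i + 1)"
proof (intro equalityI subsetI)
  fix L assume L: "L \<in> G s b (Suc i)"
  show "L \<in> G s b i \<union> (Cons i) ` G s b (fb s b i + 1)"
  proof (cases "i \<in> set L")
    case False
    have "set L \<subseteq> {1..<i}"
    proof
      fix x assume "x \<in> set L"
      then show "x \<in> {1..<i}" using L False by (auto simp: G_def subset_iff less_Suc_eq)
    qed
    then show ?thesis using L by (auto simp: G_def)
  next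
    case True
    then obtain x L' where xL: "L = x # L'" by (cases L) auto
    have gd: "good s b (x#L')" using L xL by (auto simp: G_def)
    have "x \<le> i" using L xL by (auto simp: G_def)
    moreover have "i \<noteq> x \<Longrightarrow> i \<in> set L'" using True xL by auto
    ultimately have xi: "x = i" using good_head_max[OF gd, of i] by force
    have "\<forall>y\<in>set L'. 1 \<le> y \<and> y \<le> fb s b i"
    proof
      fix y assume y: "y \<in> set L'"
      have y1: "1 \<le> y" using gd y by (auto simp: good_def)
      moreover have "binof b y + s < binof b i" using gd xi y by (auto simp: good_Cons)
      ultimately show "1 \<le> y \<and> y \<le> fb s b i" using cond_iff[OF b y1] unfolding fb_def by auto
    qed
    then have "L' \<in> G s b (fb s b i + 1)" using gd by (auto simp: G_def good_Cons)
    then show ?thesis using xL xi by auto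
  qed
next
  fix L assume L: "L \<in> G s b i \<union> (Cons i) ` G s b (fb s b i + 1)"
  show "L \<in> G s b (Suc i)"
  proof (cases "L \<in> G s b i")
    case True
    then show ?thesis by (auto simp: G_def)
  next
    case False
    then obtain L' where L': "L = i # L'" "L' \<in> G s b (fb s b i + 1)" using L by auto
    have "\<forall>y\<in>set L'. 1 \<le> y \<and> y \<le> fb s b i" using L'(2) by (auto simp: G_def)
    then have "\<forall>y\<in>set L'. binof b y + s < binof b i \<and> y < i"
      using cond_iff[OF b] fb_less[OF b i, of s] unfolding fb_def by fastforce
    then have "\<forall>y\<in>set L'. binof b y + s < binof b i \<and> y < i \<and> 1 \<le> y" using L'(2) by (auto simp: G_def good_def)
    then show ?thesis using L' i by (fastforce simp: G_def good_Cons)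
  qed
qed

lemma G_one: "G s b 1 = {[]}"
  by (auto simp: G_def)

lemma G_one': "G s b (Suc 0) = {[]}"
  by (auto simp: G_def)

lemma Nil_G: "[] \<in> G s b i" by (simp add: G_def)

lemma a_eq:
  assumes b: "b \<ge> 1" and sm: "strict_mono_on {1..} a"
    and rec: "a i = (LEAST x. x > 0 \<and> \<not> (\<exists>L. set L \<subseteq> {1..<i} \<and> legal_decomp s b a x L))"
    and img: "(\<lambda>L. sum_list (map a L)) ` G s b i = {0..<N}" and N: "N \<ge> 1"
  shows "a i = N"
proof -
  have eq: "(\<exists>L. set L \<subseteq> {1..<i} \<and> legal_decomp s b a x L) \<longleftrightarrow> x < N" for x
  proof -
    have "(\<exists>L. set L \<subseteq> {1..<i} \<and> legal_decomp s b a x L) \<longleftrightarrow> x \<in> (\<lambda>L. sum_list (map a L)) ` G s b i"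
      using legal_iff[OF b sm] by (auto simp: G_def)
    then show ?thesis using img by auto
  qed
  have "a i = (LEAST x. x > 0 \<and> \<not> x < N)" by (subst rec) (simp only: eq)
  also have "\<dots> = N" using N by (intro Least_equality) auto
  finally show ?thesis .
qed

lemma main:
  assumes b: "b \<ge> 1" and sm: "strict_mono_on {1..} a"
    and rec: "\<forall>i\<ge>1. a i = (LEAST x. x > 0 \<and> \<not> (\<exists>L. set L \<subseteq> {1..<i} \<and> legal_decomp s b a x L))"
  shows "i \<ge> 1 \<Longrightarrow> (\<lambda>L. sum_list (map a L)) ` G s b i = {0..<a i} \<and> inj_on (\<lambda>L. sum_list (map a L)) (G s b i)"
proof (induction i rule: less_induct)
  case (less i)
  let ?S = "\<lambda>L. sum_list (map a L)"
  show ?case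
  proof (cases "i = 1")
    case True
    have "?S ` G s b 1 = {0..<1}" unfolding G_one by simp
    moreover then have "a 1 = 1" using a_eq[OF b sm rec[rule_format, OF order_refl]] by simp
    ultimately show ?thesis using True by (simp add: G_one')
  next
    case False
    then obtain j where j: "i = Suc j" "j \<ge> 1" using less.prems by (cases i) auto
    have f: "fb s b j + 1 \<le> j" using fb_less[OF b j(2), of s] by auto
    have IH1: "?S ` G s b j = {0..<a j}" "inj_on ?S (G s b j)" using less.IH[of j] j by auto
    have IH2: "?S ` G s b (fb s b j + 1) = {0..<a (fb s b j + 1)}" "inj_on ?S (G s b (fb s b j + 1))"
      using less.IH[of "fb s b j + 1"] j f by auto
    have aj: "a j \<ge> 1" using IH1(1) Nil_G[of s b j]
      by (metis atLeastLessThan_iff image_eqI less_one linorder_not_le list.simps(8) sum_list_simps(1))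
    have GS: "G s b i = G s b j \<union> (Cons j) ` G s b (fb s b j + 1)" using G_Suc[OF b j(2)] j by simp
    have "?S ` G s b i = ?S ` G s b j \<union> (\<lambda>L. a j + ?S L) ` G s b (fb s b j + 1)"
      unfolding GS image_Un image_image by simp
    also have "\<dots> = {0..<a j} \<union> (\<lambda>x. a j + x) ` {0..<a (fb s b j + 1)}"
      using IH1(1) IH2(1) by (metis image_image)
    also have "\<dots> = {0..<a j + a (fb s b j + 1)}"
    proof -
      have "(\<lambda>x. a j + x) ` {0..<a (fb s b j + 1)} = {a j..<a j + a (fb s b j + 1)}"
        by (simp add: add.commute)
      then show ?thesis by auto
    qed
    finally have img: "?S ` G s b i = {0..<a j + a (fb s b j + 1)}" .
    have ai: "a i = a j + a (fb s b j + 1)"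
      using a_eq[OF b sm rec[rule_format, OF less.prems] img] j aj by simp
    have inj: "inj_on ?S (G s b i)"
    proof (rule inj_onI)
      fix L1 L2 assume L1: "L1 \<in> G s b i" and L2: "L2 \<in> G s b i" and eq: "?S L1 = ?S L2"
      have lo: "?S L < a j" if "L \<in> G s b j" for L using IH1(1) that by auto
      have hi: "?S (j # L) \<ge> a j" for L by simp
      show "L1 = L2"
      proof (cases "L1 \<in> G s b j")
        case True
        then show ?thesis
        proof (cases "L2 \<in> G s b j")
          case True
          then show ?thesis using \<open>L1 \<in> G s b j\<close> eq IH1(2) by (auto dest: inj_onD)
        next
          case False
          then obtain M2 where "L2 = j # M2" using L2 GS by auto
          then show ?thesis using lo[OF True] hi[of M2] eq by auto
        qed
      next
        case False
        then obtain M1 where M1: "L1 = j # M1" "M1 \<in> G s b (fb s b j + 1)" using L1 GS by auto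
        show ?thesis
        proof (cases "L2 \<in> G s b j")
          case True
          then show ?thesis using lo[OF True] hi[of M1] eq M1 by auto
        next
          case False
          then obtain M2 where M2: "L2 = j # M2" "M2 \<in> G s b (fb s b j + 1)" using L2 GS by auto
          have "?S M1 = ?S M2" using eq M1 M2 by simp
          then show ?thesis using M1 M2 IH2(2) by (auto dest: inj_onD)
        qed
      qed
    qed
    show ?thesis using img ai inj by simp
  qed
qed

definition H :: "nat \<Rightarrow> nat \<Rightarrow> nat \<Rightarrow> nat \<Rightarrow> nat list set" where
  "H s b n k = {L. good s b L \<and> set L \<subseteq> {1..<n*b+1} \<and> length L = k}"

lemma H_finite: "finite (H s b n k)"
proof -
  have "H s b n k \<subseteq> {xs. set xs \<subseteq> {1..<n*b+1} \<and> length xs = k}" by (auto simp: H_def)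
  then show ?thesis using finite_lists_length_eq[of "{1..<n*b+1}" k] finite_subset by auto
qed

lemma H_zero: "H s b 0 k = (if k = 0 then {[]} else {})"
  by (auto simp: H_def)

lemma H_k0: "H s b n 0 = {[]}"
  by (auto simp: H_def)

lemma binof_top: assumes b: "b \<ge> 1" and x: "m*b+1 \<le> x" "x \<le> m*b+b"
  shows "binof b x = Suc m"
  using binof_char[of b x "Suc m"] b x by (auto simp: algebra_simps)

lemma H_split: assumes b: "b \<ge> 1"
  shows "H s b (Suc m) (Suc k) = H s b m (Suc k) \<union> (\<lambda>(h,L). h#L) ` ({m*b+1..m*b+b} \<times> H s b (m-s) k)"
proof (intro equalityI subsetI)
  fix L assume L: "L \<in> H s b (Suc m) (Suc k)"
  then obtain x L' where xL: "L = x # L'" unfolding H_def by (cases L) auto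
  have gd: "good s b (x#L')" and st: "set (x#L') \<subseteq> {1..<Suc m*b+1}" and len: "length L' = k"
    using L xL by (auto simp: H_def)
  show "L \<in> H s b m (Suc k) \<union> (\<lambda>(h,L). h#L) ` ({m*b+1..m*b+b} \<times> H s b (m-s) k)"
  proof (cases "x \<le> m*b")
    case True
    have "\<forall>y\<in>set L'. y < x" using good_head_max[OF gd] by auto
    then have "set (x#L') \<subseteq> {1..<m*b+1}" using st True by fastforce
    then have "L \<in> H s b m (Suc k)" using gd len xL by (auto simp: H_def)
    then show ?thesis by blast
  next
    case False
    then have xr: "m*b+1 \<le> x" "x \<le> m*b+b" using st by auto
    have bx: "binof b x = Suc m" using binof_top[OF b xr] .
    have "\<forall>y\<in>set L'. 1 \<le> y \<and> y \<le> (m-s)*b"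
    proof
      fix y assume y: "y \<in> set L'"
      have y1: "1 \<le> y" using gd y by (auto simp: good_def)
      moreover have "binof b y + s < binof b x" using gd y by (auto simp: good_Cons)
      ultimately show "1 \<le> y \<and> y \<le> (m-s)*b" using cond_iff[OF b y1, of s x] bx by (simp add: mult.commute)
    qed
    then have "L' \<in> H s b (m-s) k" using gd len by (auto simp: H_def good_Cons)
    then have "(x, L') \<in> {m*b+1..m*b+b} \<times> H s b (m-s) k" using xr by simp
    then have "L \<in> (\<lambda>(h,L). h#L) ` ({m*b+1..m*b+b} \<times> H s b (m-s) k)"
      by (rule rev_image_eqI) (simp add: xL)
    then show ?thesis by (rule UnI2)
  qed
next
  fix L assume L: "L \<in> H s b m (Suc k) \<union> (\<lambda>(h,L). h#L) ` ({m*b+1..m*b+b} \<times> H s b (m-s) k)"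
  show "L \<in> H s b (Suc m) (Suc k)"
  proof (cases "L \<in> H s b m (Suc k)")
    case True
    then show ?thesis by (auto simp: H_def)
  next
    case False
    then obtain h L' where hL: "L = h # L'" "m*b+1 \<le> h" "h \<le> m*b+b" "L' \<in> H s b (m-s) k" using L by auto
    have bh: "binof b h = Suc m" using binof_top[OF b hL(2,3)] .
    have ys: "\<forall>y\<in>set L'. 1 \<le> y \<and> y \<le> (m-s)*b" using hL(4) by (auto simp: H_def)
    have "\<forall>y\<in>set L'. binof b y + s < binof b h"
    proof
      fix y assume y: "y \<in> set L'"
      have y1: "1 \<le> y" using ys y by auto
      show "binof b y + s < binof b h" using cond_iff[OF b y1, of s h] bh ys y by (simp add: mult.commute)
    qed
    moreover have "\<forall>y\<in>set L'. y < Suc m*b+1"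
    proof
      fix y assume "y \<in> set L'"
      then have "y \<le> (m-s)*b" using ys by auto
      also have "\<dots> \<le> m*b" by simp
      finally show "y < Suc m*b+1" by simp
    qed
    ultimately have g: "good s b (h#L')" and st: "set (h#L') \<subseteq> {1..<Suc m*b+1}"
      using hL ys by (auto simp: H_def good_Cons)
    have "length (h#L') = Suc k" using hL(4) by (simp add: H_def)
    then show ?thesis using g st hL(1) unfolding H_def by blast
  qed
qed

lemma H_card_split: assumes b: "b \<ge> 1"
  shows "card (H s b (Suc m) (Suc k)) = card (H s b m (Suc k)) + b * card (H s b (m-s) k)"
proof -
  let ?A = "H s b m (Suc k)" and ?B = "(\<lambda>(h,L). h#L) ` ({m*b+1..m*b+b} \<times> H s b (m-s) k)"
  have disj: "?A \<inter> ?B = {}"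
  proof -
    have "\<forall>L\<in>?A. \<forall>x\<in>set L. x \<le> m*b" by (auto simp: H_def)
    moreover have "\<forall>L\<in>?B. hd L > m*b \<and> L \<noteq> []" by auto
    ultimately show ?thesis by (auto simp: disjoint_iff)
  qed
  have fB: "finite ?B" using H_finite by auto
  have "card ?B = card ({m*b+1..m*b+b} \<times> H s b (m-s) k)"
    by (rule card_image) (auto simp: inj_on_def)
  also have "\<dots> = b * card (H s b (m-s) k)" by (simp add: card_cartesian_product)
  finally have cB: "card ?B = b * card (H s b (m-s) k)" .
  show ?thesis using H_split[OF b] card_Un_disjoint[OF H_finite fB disj] cB by simp
qed

lemma arith: "b^(Suc k) * ((Suc m - s*k) choose Suc k) = b^(Suc k) * ((m - s*k) choose Suc k) + b * (b^k * (((m - s) - s*(k-1)) choose k))"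
proof (cases "k = 0")
  case True
  then show ?thesis by simp
next
  case False
  have e: "(m - s) - s*(k-1) = m - s*k" using False
    by (metis diff_diff_left mult.right_neutral mult_Suc_right Suc_pred' not_gr_zero)
  have "(Suc m - s*k) choose Suc k = (m - s*k choose Suc k) + (m - s*k choose k)"
  proof (cases "s*k \<le> m")
    case True
    then have "Suc m - s*k = Suc (m - s*k)" by auto
    then show ?thesis by simp
  next
    case f2: False
    then have "Suc m - s*k = 0" "m - s*k = 0" by auto
    then show ?thesis using False by simp
  qed
  then show ?thesis unfolding e by (simp add: algebra_simps)
qed

lemma H_count: assumes b: "b \<ge> 1"
  shows "card (H s b n k) = b^k * ((n - s*(k-1)) choose k)"
proof (induction n arbitrary: k rule: less_induct)
  case (less n)
  show ?case
  proof (cases n)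
    case 0
    then show ?thesis by (cases k) (auto simp: H_zero)
  next
    case (Suc m)
    show ?thesis
    proof (cases k)
      case 0
      then show ?thesis by (simp add: H_k0)
    next
      case (Suc k')
      have "card (H s b n k) = card (H s b m (Suc k')) + b * card (H s b (m-s) k')"
        using H_card_split[OF b] \<open>n = Suc m\<close> Suc by simp
      also have "\<dots> = b^(Suc k') * ((m - s*k') choose Suc k') + b * (b^k' * (((m - s) - s*(k'-1)) choose k'))"
        using less.IH[of m "Suc k'"] less.IH[of "m-s" k'] \<open>n = Suc m\<close> by simp
      also have "\<dots> = b^(Suc k') * ((Suc m - s*k') choose Suc k')" using arith by simp
      finally show ?thesis using \<open>n = Suc m\<close> Suc by simp
    qed
  qed
qed

theorem propositionC1:
  fixes s b n k :: nat and a :: "nat \<Rightarrow> nat"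
  assumes "s \<ge> 1" and "b \<ge> 1"
    and "is_generacci s b a"
    and "k \<ge> 1" and "n \<ge> 1 + (k - 1) * (s + 1)"
  shows "p_count s b a n k = b ^ k * ((n - s * (k - 1)) choose k)"
proof -
  have b: "b \<ge> 1" using assms by simp
  have sm: "strict_mono_on {1..} a" and rec: "\<forall>i\<ge>1. a i = (LEAST x. x > 0 \<and> \<not> (\<exists>L. set L \<subseteq> {1..<i} \<and> legal_decomp s b a x L))"
    using assms(3) unfolding is_generacci_def by auto
  let ?S = "\<lambda>L. sum_list (map a L)"
  let ?N = "n*b+1"
  have M: "?S ` G s b ?N = {0..<a ?N}" "inj_on ?S (G s b ?N)" using main[OF b sm rec, of ?N] by auto
  have HG: "H s b n k \<subseteq> G s b ?N" by (auto simp: H_def G_def)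
  have eq: "{m. m < a ?N \<and> (\<exists>L. legal_decomp s b a m L \<and> length L = k)} = ?S ` H s b n k"
  proof (intro equalityI subsetI)
    fix m assume "m \<in> {m. m < a ?N \<and> (\<exists>L. legal_decomp s b a m L \<and> length L = k)}"
    then obtain L where m: "m < a ?N" and l: "legal_decomp s b a m L" and len: "length L = k" by auto
    have g: "good s b L" and sm_: "?S L = m" using legal_iff[OF b sm] l by auto
    have "set L \<subseteq> {1..<?N}"
    proof
      fix x assume x: "x \<in> set L"
      have x1: "x \<ge> 1" using g x by (auto simp: good_def)
      have "\<not> x \<ge> ?N"
      proof
        assume "x \<ge> ?N"
        then have "a ?N \<le> a x" using strict_mono_on_leD[OF sm, of ?N x] by simp
        also have "a x \<le> ?S L" using x by (simp add: member_le_sum_list)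
        finally show False using m sm_ by simp
      qed
      then show "x \<in> {1..<?N}" using x1 by simp
    qed
    then have "L \<in> H s b n k" using g len by (simp add: H_def)
    then show "m \<in> ?S ` H s b n k" using sm_ by force
  next
    fix m assume "m \<in> ?S ` H s b n k"
    then obtain L where L: "L \<in> H s b n k" "m = ?S L" by auto
    have "L \<in> G s b ?N" using L HG by auto
    then have "?S L \<in> {0..<a ?N}" using M(1) by (metis image_eqI)
    then have "m < a ?N" using L by simp
    moreover have "legal_decomp s b a m L" using legal_iff[OF b sm] L by (simp add: H_def)
    moreover have "length L = k" using L by (simp add: H_def)
    ultimately show "m \<in> {m. m < a ?N \<and> (\<exists>L. legal_decomp s b a m L \<and> length L = k)}" by auto
  qed
  have "p_count s b a n k = card (?S ` H s b n k)" unfolding p_count_def eq ..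
  also have "\<dots> = card (H s b n k)" using inj_on_subset[OF M(2) HG] by (rule card_image)
  also have "\<dots> = b ^ k * ((n - s * (k - 1)) choose k)" using H_count[OF b] .
  finally show ?thesis .
qed

end
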